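(* Let $p$ be a prime. For every real number $M$ there exists a positive integer $A$ such that for all integers $r>1$ and $a\ge A$, \[\frac{(r^a-1)_{p'}}{a\cdot a_p}>M.\] That is, $(r^a-1)_{p'}/(a\cdot a_p)\to\infty$ as $a\to\infty$, uniformly in the integer $r>1$.
   Context: For a positive integer $n$, $n_p$ denotes the largest power of $p$ dividing $n$ and $n_{p'}=n/n_p$. *)

theory Defs
  imports Complex_Main "HOL-Computational_Algebra.Primes"
begin

definition p_part :: "nat \<Rightarrow> nat \<Rightarrow> nat" where
  "p_part p n = p ^ multiplicity p n"

definition p'_part :: "nat \<Rightarrow> nat \<Rightarrow> nat" where
  "p'_part p n = n div p_part p n"

end

theory Submission imports Defs "HOL-Number_Theory.Number_Theory" "HOL-Real_Asymp.Real_Asymp" begin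

lemma geom_nat: fixes x :: nat assumes "x \<ge> 1"
  shows "x ^ n - 1 = (x - 1) * (\<Sum>i<n. x ^ i)"
proof -
  have "int (x ^ n - 1) = int x ^ n - 1" using assms by (simp add: of_nat_diff)
  also have "\<dots> = (int x - 1) * (\<Sum>i<n. int x ^ i)" by (rule power_diff_1_eq)
  also have "\<dots> = int ((x - 1) * (\<Sum>i<n. x ^ i))" using assms by (simp add: of_nat_diff)
  finally show ?thesis by linarith
qed

lemma sum_cong_one: fixes x q :: nat assumes "[x = 1] (mod q)"
  shows "[(\<Sum>i<n. x ^ i) = n] (mod q)"
proof -
  have "[(\<Sum>i<n. x ^ i) = (\<Sum>i<n. 1)] (mod q)"
    by (rule cong_sum) (use cong_pow[OF assms] in simp)
  thus ?thesis by simp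
qed

lemma step1: fixes p x m :: nat
  assumes p: "prime p" and x: "x > 1" and px: "p dvd x - 1" and pm: "\<not> p dvd m"
  shows "multiplicity p (x ^ m - 1) = multiplicity p (x - 1)"
proof -
  have c: "[x = 1] (mod p)" using px x by (subst cong_altdef_nat) auto
  have "[(\<Sum>i<m. x ^ i) = m] (mod p)" by (rule sum_cong_one[OF c])
  hence nd: "\<not> p dvd (\<Sum>i<m. x ^ i)" using pm by (meson cong_dvd_iff)
  hence nz: "(\<Sum>i<m. x ^ i) \<noteq> 0" by (metis dvd_0_right)
  have "multiplicity p (x ^ m - 1) = multiplicity p (x - 1) + multiplicity p (\<Sum>i<m. x ^ i)"
    using geom_nat[of x m] x nz p
    by (simp add: prime_elem_multiplicity_mult_distrib)
  thus ?thesis using nd by (simp add: not_dvd_imp_multiplicity_0)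
qed

lemma step2: fixes p y :: nat
  assumes p: "prime p" and y: "y > 1" and py: "p^2 dvd y - 1"
  shows "multiplicity p (y ^ p - 1) = Suc (multiplicity p (y - 1))"
proof -
  have c: "[y = 1] (mod p^2)" using py y by (subst cong_altdef_nat) auto
  have T: "[(\<Sum>i<p. y ^ i) = p] (mod p^2)" by (rule sum_cong_one[OF c])
  have "p dvd p^2" using p by (simp add: power2_eq_square)
  hence "p dvd (\<Sum>i<p. y ^ i)" using T by (meson cong_dvd_iff cong_dvd_modulus_nat dvd_refl)
  then obtain T' where T': "(\<Sum>i<p. y ^ i) = p * T'" by blast
  have nT': "\<not> p dvd T'"
  proof
    assume "p dvd T'"
    hence "p^2 dvd (\<Sum>i<p. y ^ i)" using T' by (auto simp: power2_eq_square)
    hence "p^2 dvd p" using T by (meson cong_dvd_iff)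
    hence "p*p \<le> p" using p by (metis dvd_imp_le power2_eq_square prime_gt_0_nat)
    thus False using prime_gt_1_nat[OF p] by simp
  qed
  hence T'0: "T' \<noteq> 0" by (metis dvd_0_right)
  have mT: "multiplicity p (\<Sum>i<p. y ^ i) = 1"
    using T' nT' p T'0 by (metis multiplicity_decomposeI not_prime_0 power_one_right)
  have "multiplicity p (y ^ p - 1) = multiplicity p (y - 1) + multiplicity p (\<Sum>i<p. y ^ i)"
    using geom_nat[of y p] y T' T'0 p by (simp add: prime_elem_multiplicity_mult_distrib)
  thus ?thesis using mT by simp
qed


lemma dvd_pow_minus1: fixes x :: nat assumes "x \<ge> 1" shows "x - 1 dvd x ^ n - 1"
  using geom_nat[OF assms, of n] by simp

lemma step3: fixes p x :: nat
  assumes p: "prime p" and x: "x > 1" and px: "p^2 dvd x - 1"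
  shows "multiplicity p (x ^ (p^k) - 1) = multiplicity p (x - 1) + k"
proof (induction k)
  case 0 then show ?case by simp
next
  case (Suc k)
  have y: "x ^ (p^k) > 1" using x p by (intro one_less_power) (auto simp: prime_gt_0_nat)
  have "p^2 dvd x ^ (p^k) - 1" using px dvd_pow_minus1[of x "p^k"] x dvd_trans by auto
  hence "multiplicity p ((x ^ (p^k)) ^ p - 1) = Suc (multiplicity p (x ^ (p^k) - 1))"
    using step2[OF p y] by simp
  moreover have "(x ^ (p^k)) ^ p = x ^ (p ^ Suc k)" by (simp add: power_mult[symmetric] mult.commute)
  ultimately show ?case using Suc by simp
qed

lemma step4: fixes p x a :: nat
  assumes p: "prime p" and x: "x > 1" and px: "p^2 dvd x - 1" and a: "a > 0"
  shows "multiplicity p (x ^ a - 1) = multiplicity p (x - 1) + multiplicity p a"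
proof -
  obtain m where am: "a = p ^ multiplicity p a * m" and pm: "\<not> p dvd m"
    using multiplicity_decompose'[of a p] a p by (metis not_prime_unit gr_implies_not0)
  define k where "k = multiplicity p a"
  define y where "y = x ^ (p^k)"
  have y: "y > 1" unfolding y_def using x p by (intro one_less_power) (auto simp: prime_gt_0_nat)
  have "p dvd p^2" using p by (simp add: power2_eq_square)
  hence "p dvd y - 1" using px dvd_pow_minus1[of x "p^k"] x dvd_trans unfolding y_def by (meson less_imp_le)
  hence "multiplicity p (y ^ m - 1) = multiplicity p (y - 1)" using step1[OF p y _ pm] by simp
  moreover have "y ^ m = x ^ a" unfolding y_def k_def by (subst am) (simp add: power_mult)
  ultimately show ?thesis using step3[OF p x px, of k] by (simp add: y_def k_def)
qed

lemma ppow_le: fixes p n :: nat assumes "n > 0" shows "p ^ multiplicity p n \<le> n"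
  using assms by (simp add: dvd_imp_le multiplicity_dvd)

lemma p_part_bound: fixes p r a :: nat
  assumes p: "prime p" and r: "r > 1" and a: "a > 0"
  shows "p_part p (r ^ a - 1) \<le> r ^ totient (p^2) * a"
proof (cases "p dvd r")
  case True
  have "\<not> p dvd r ^ a - 1"
  proof
    assume h: "p dvd r ^ a - 1"
    have "p dvd r ^ a" using dvd_trans[OF True dvd_power[of a r]] a by simp
    hence "p dvd r ^ a - (r ^ a - 1)" using h by (simp add: dvd_diff_nat)
    moreover have "r ^ a - (r ^ a - 1) = 1" using r by (simp add: Suc_leI)
    ultimately show False using p by (simp add: prime_gt_1_nat)
  qed
  hence "p_part p (r ^ a - 1) = 1" by (simp add: p_part_def not_dvd_imp_multiplicity_0)
  moreover have "1 \<le> r ^ totient (p^2) * a" using r a by (simp add: Suc_leI)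
  ultimately show ?thesis by simp
next
  case False
  define e where "e = totient (p^2)"
  have e: "e > 0" using p by (simp add: e_def prime_gt_0_nat)
  have "coprime r (p^2)" using False p by (simp add: prime_imp_coprime coprime_commute)
  hence "[r ^ e = 1] (mod p^2)" unfolding e_def by (rule euler_theorem)
  hence pe: "p^2 dvd r ^ e - 1" using r by (subst (asm) cong_altdef_nat) auto
  define x where "x = r ^ e"
  have x: "x > 1" unfolding x_def using r e by (intro one_less_power) auto
  have ra0: "r ^ a - 1 \<noteq> 0" using one_less_power[OF r a] by simp
  have "r ^ a - 1 dvd (r ^ a) ^ e - 1" using r by (intro dvd_pow_minus1) simp
  also have "(r ^ a) ^ e = x ^ a" by (simp add: x_def power_mult[symmetric] mult.commute)
  finally have d: "r ^ a - 1 dvd x ^ a - 1" .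
  have "x ^ a - 1 \<noteq> 0" using one_less_power[OF x a] by simp
  hence "multiplicity p (r ^ a - 1) \<le> multiplicity p (x ^ a - 1)"
    using d by (rule dvd_imp_multiplicity_le[rotated])
  also have "\<dots> = multiplicity p (x - 1) + multiplicity p a" using step4[OF p x _ a] pe x_def by simp
  finally have m: "multiplicity p (r ^ a - 1) \<le> multiplicity p (x - 1) + multiplicity p a" .
  have "p_part p (r ^ a - 1) \<le> p ^ (multiplicity p (x - 1) + multiplicity p a)"
    unfolding p_part_def by (rule power_increasing[OF m]) (use prime_gt_0_nat[OF p] in simp)
  also have "\<dots> = p ^ multiplicity p (x - 1) * p ^ multiplicity p a" by (simp add: power_add)
  also have "\<dots> \<le> (x - 1) * a" using ppow_le[of "x - 1" p] ppow_le[of a p] x a by (intro mult_mono) auto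
  also have "\<dots> \<le> x * a" by simp
  finally show ?thesis by (simp add: x_def e_def)
qed

lemma growth: "filterlim (\<lambda>a::nat. 2 ^ a / (real a)^3) at_top sequentially"
  by real_asymp


theorem lemma2p5:
  fixes p :: nat
  assumes "prime p"
  shows "\<forall>M::real. \<exists>A::nat. A > 0 \<and>
           (\<forall>r a::nat. r > 1 \<longrightarrow> a \<ge> A \<longrightarrow>
              real (p'_part p (r ^ a - 1)) / (real a * real (p_part p a)) > M)"
proof
  fix M :: real
  define e where "e = totient (p^2)"
  define Z :: real where "Z = \<bar>M\<bar> * 2^(e+1) + 1"
  have "eventually (\<lambda>a::nat. Z \<le> 2 ^ a / (real a)^3) sequentially"
    using growth by (simp add: filterlim_at_top)
  then obtain N where N: "\<And>a. a \<ge> N \<Longrightarrow> Z \<le> 2 ^ a / (real a)^3"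
    by (auto simp: eventually_sequentially)
  show "\<exists>A::nat. A > 0 \<and> (\<forall>r a::nat. r > 1 \<longrightarrow> a \<ge> A \<longrightarrow>
              real (p'_part p (r ^ a - 1)) / (real a * real (p_part p a)) > M)"
  proof (intro exI[of _ "N + e + 1"] conjI allI impI)
    fix r a :: nat assume r: "r > 1" and aA: "a \<ge> N + e + 1"
    have a: "a > 0" using aA by simp
    define n where "n = r ^ a - 1"
    define q where "q = p_part p n"
    define ap where "ap = p_part p a"
    have rge: "r ^ a \<ge> 2" using power_increasing[of 1 a r] r a by simp
    have qdvd: "q dvd n" by (simp add: q_def p_part_def multiplicity_dvd)
    have q1: "q \<ge> 1" using assms by (simp add: q_def p_part_def prime_gt_0_nat Suc_leI)
    have ap1: "ap \<ge> 1" using assms by (simp add: ap_def p_part_def prime_gt_0_nat Suc_leI)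
    have qb: "q \<le> r ^ e * a" unfolding q_def n_def e_def by (rule p_part_bound[OF assms r a])
    have apb: "ap \<le> a" unfolding ap_def p_part_def by (rule ppow_le[OF a])
    have pp: "real (p'_part p n) = real n / real q"
      using qdvd by (simp add: p'_part_def q_def real_of_nat_div)
    have rn: "real n = real r ^ a - 1" using rge by (simp add: n_def of_nat_diff)
    have rge': "real r ^ a \<ge> 2" using rge by (metis of_nat_le_iff of_nat_numeral of_nat_power)
    have rn2: "real n \<ge> real r ^ a / 2" using rn rge' by linarith
    have D: "real q * real a * real ap \<le> real r ^ e * (real a)^3"
    proof -
      have "real q * real a * real ap \<le> (real r ^ e * real a) * real a * real a"
        using qb apb a by (intro mult_mono) (auto simp flip: of_nat_power of_nat_mult)
      thus ?thesis by (simp add: power3_eq_cube mult_ac)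
    qed
    have Dpos: "real q * real a * real ap > 0" using q1 ap1 a by simp
    have rsplit: "real r ^ a = real r ^ e * real r ^ (a - e)"
      using aA by (simp add: power_add[symmetric])
    have r2: "real r ^ (a - e) \<ge> 2 ^ (a - e)" using r by (intro power_mono) auto
    have a3: "(real a)^3 > 0" using a by simp
    have re: "real r ^ e > 0" using r by simp
    have "M * 2^(e+1) \<le> \<bar>M\<bar> * 2^(e+1)" by (intro mult_right_mono) auto
    hence "M * 2^(e+1) < Z" unfolding Z_def by linarith
    hence "M < Z / 2^(e+1)" by (simp add: field_simps)
    also have "Z / 2^(e+1) \<le> (2 ^ a / (real a)^3) / 2^(e+1)"
      using N[of a] aA by (intro divide_right_mono) auto
    also have "\<dots> = 2 ^ (a - e) / (2 * (real a)^3)"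
    proof -
      have "(2::real) ^ a = 2 ^ (a - e) * 2 ^ e" using aA by (simp add: power_add[symmetric])
      thus ?thesis by (simp add: field_simps)
    qed
    also have "\<dots> \<le> real r ^ (a - e) / (2 * (real a)^3)"
      using r2 a3 by (intro divide_right_mono) auto
    also have "\<dots> = (real r ^ a / 2) / (real r ^ e * (real a)^3)"
      using re a3 r by (subst rsplit) (simp add: field_simps)
    also have "\<dots> \<le> real n / (real r ^ e * (real a)^3)"
      using rn2 re a3 by (intro divide_right_mono) auto
    also have "\<dots> \<le> real n / (real q * real a * real ap)"
      using D Dpos rn rge by (intro divide_left_mono) auto
    also have "\<dots> = real (p'_part p n) / (real a * real ap)"
      using pp by (simp add: mult_ac)
    finally show "real (p'_part p (r ^ a - 1)) / (real a * real (p_part p a)) > M"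
      by (simp add: n_def ap_def)
  qed simp
qed

end
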